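(* Let $(A,\cdot,[-,-])$ be a transposed Poisson algebra and let $\mathcal B$ be a nondegenerate symmetric bilinear form on $A$ which is invariant on $(A,\cdot)$ (i.e. $\mathcal B(x\cdot y,z)=\mathcal B(x,y\cdot z)$ for all $x,y,z$) and is a commutative 2-cocycle on $(A,[-,-])$. Define $\circ$ on $A$ by $\mathcal B(x\circ y,z)=\mathcal B(y,[x,z])$ for all $x,y,z\in A$. Then $(A,\cdot,\circ)$ is an anti-pre-Lie Poisson algebra.
   Context: All vector spaces are finite-dimensional over a field $\mathbb F$ of characteristic $0$. A transposed Poisson algebra is $(A,\cdot,[-,-])$ with $(A,\cdot)$ commutative associative, $(A,[-,-])$ a Lie algebra, and $2z\cdot[x,y]=[z\cdot x,y]+[x,z\cdot y]$ for all $x,y,z$. A commutative 2-cocycle on a Lie algebra is a symmetric bilinear form with $\mathcal B([x,y],z)+\mathcal B([y,z],x)+\mathcal B([z,x],y)=0$. For a bilinear operation $\circ$ write $[x,y]_\circ=x\circ y-y\circ x$; an anti-pre-Lie algebra is $(A,\circ)$ with $x\circ(y\circ z)-y\circ(x\circ z)=[y,x]_\circ\circ z$ and $[x,y]_\circ\circ z+[y,z]_\circ\circ x+[z,x]_\circ\circ y=0$. An anti-pre-Lie Poisson algebra is $(A,\cdot,\circ)$ with $(A,\cdot)$ commutative associative, $(A,\circ)$ anti-pre-Lie, and $2(x\circ y)\cdot z-2(y\circ x)\cdot z=y\cdot(x\circ z)-x\cdot(y\circ z)$, $2x\circ(y\cdot z)=(z\cdot x)\circ y+z\cdot(x\circ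 y)$ for all $x,y,z$. *)

theory Defs
  imports Main "HOL.Vector_Spaces"
begin

definition bilinear_op :: "('k::field \<Rightarrow> 'v::ab_group_add \<Rightarrow> 'v) \<Rightarrow> ('v \<Rightarrow> 'v \<Rightarrow> 'v) \<Rightarrow> bool" where
  "bilinear_op scale f \<longleftrightarrow>
     (\<forall>x y z. f (x + y) z = f x z + f y z) \<and>
     (\<forall>x y z. f x (y + z) = f x y + f x z) \<and>
     (\<forall>a x y. f (scale a x) y = scale a (f x y)) \<and>
     (\<forall>a x y. f x (scale a y) = scale a (f x y))"

definition bilinear_form :: "('k::field \<Rightarrow> 'v::ab_group_add \<Rightarrow> 'v) \<Rightarrow> ('v \<Rightarrow> 'v \<Rightarrow> 'k) \<Rightarrow> bool" where
  "bilinear_form scale B \<longleftrightarrow>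
     (\<forall>x y z. B (x + y) z = B x z + B y z) \<and>
     (\<forall>x y z. B x (y + z) = B x y + B x z) \<and>
     (\<forall>a x y. B (scale a x) y = a * B x y) \<and>
     (\<forall>a x y. B x (scale a y) = a * B x y)"

definition symmetric_form :: "('v \<Rightarrow> 'v \<Rightarrow> 'k) \<Rightarrow> bool" where
  "symmetric_form B \<longleftrightarrow> (\<forall>x y. B x y = B y x)"

definition nondegenerate_form :: "('v::zero \<Rightarrow> 'v \<Rightarrow> 'k::zero) \<Rightarrow> bool" where
  "nondegenerate_form B \<longleftrightarrow> (\<forall>x. (\<forall>y. B x y = 0) \<longrightarrow> x = 0)"

definition invariant_form :: "('v \<Rightarrow> 'v \<Rightarrow> 'v) \<Rightarrow> ('v \<Rightarrow> 'v \<Rightarrow> 'k) \<Rightarrow> bool" where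
  "invariant_form mult B \<longleftrightarrow> (\<forall>x y z. B (mult x y) z = B x (mult y z))"

definition comm_2_cocycle :: "('v \<Rightarrow> 'v \<Rightarrow> 'v) \<Rightarrow> ('v \<Rightarrow> 'v \<Rightarrow> 'k::ab_group_add) \<Rightarrow> bool" where
  "comm_2_cocycle br B \<longleftrightarrow> symmetric_form B \<and>
     (\<forall>x y z. B (br x y) z + B (br y z) x + B (br z x) y = 0)"

definition comm_assoc_algebra :: "('k::field \<Rightarrow> 'v::ab_group_add \<Rightarrow> 'v) \<Rightarrow> ('v \<Rightarrow> 'v \<Rightarrow> 'v) \<Rightarrow> bool" where
  "comm_assoc_algebra scale mult \<longleftrightarrow> bilinear_op scale mult \<and>
     (\<forall>x y. mult x y = mult y x) \<and>
     (\<forall>x y z. mult (mult x y) z = mult x (mult y z))"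

definition lie_algebra :: "('k::field \<Rightarrow> 'v::ab_group_add \<Rightarrow> 'v) \<Rightarrow> ('v \<Rightarrow> 'v \<Rightarrow> 'v) \<Rightarrow> bool" where
  "lie_algebra scale br \<longleftrightarrow> bilinear_op scale br \<and>
     (\<forall>x. br x x = 0) \<and>
     (\<forall>x y z. br x (br y z) + br y (br z x) + br z (br x y) = 0)"

definition transposed_poisson :: "('k::field \<Rightarrow> 'v::ab_group_add \<Rightarrow> 'v) \<Rightarrow> ('v \<Rightarrow> 'v \<Rightarrow> 'v) \<Rightarrow> ('v \<Rightarrow> 'v \<Rightarrow> 'v) \<Rightarrow> bool" where
  "transposed_poisson scale mult br \<longleftrightarrow> comm_assoc_algebra scale mult \<and> lie_algebra scale br \<and>
     (\<forall>x y z. scale 2 (mult z (br x y)) = br (mult z x) y + br x (mult z y))"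

definition commutator :: "('v \<Rightarrow> 'v \<Rightarrow> 'v::ab_group_add) \<Rightarrow> 'v \<Rightarrow> 'v \<Rightarrow> 'v" where
  "commutator circ x y = circ x y - circ y x"

definition anti_pre_lie :: "('k::field \<Rightarrow> 'v::ab_group_add \<Rightarrow> 'v) \<Rightarrow> ('v \<Rightarrow> 'v \<Rightarrow> 'v) \<Rightarrow> bool" where
  "anti_pre_lie scale circ \<longleftrightarrow> bilinear_op scale circ \<and>
     (\<forall>x y z. circ x (circ y z) - circ y (circ x z) = circ (commutator circ y x) z) \<and>
     (\<forall>x y z. circ (commutator circ x y) z + circ (commutator circ y z) x
              + circ (commutator circ z x) y = 0)"

definition anti_pre_lie_poisson :: "('k::field \<Rightarrow> 'v::ab_group_add \<Rightarrow> 'v) \<Rightarrow> ('v \<Rightarrow> 'v \<Rightarrow> 'v) \<Rightarrow> ('v \<Rightarrow> 'v \<Rightarrow> 'v) \<Rightarrow> bool" where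
  "anti_pre_lie_poisson scale mult circ \<longleftrightarrow> comm_assoc_algebra scale mult \<and> anti_pre_lie scale circ \<and>
     (\<forall>x y z. scale 2 (mult (circ x y) z) - scale 2 (mult (circ y x) z)
              = mult y (circ x z) - mult x (circ y z)) \<and>
     (\<forall>x y z. scale 2 (circ x (mult y z)) = circ (mult z x) y + mult z (circ x y))"

end

theory Submission
  imports Defs
begin

locale tpctx =
  fixes scale :: "'k::field_char_0 \<Rightarrow> 'v::ab_group_add \<Rightarrow> 'v"
    and mult br circ :: "'v \<Rightarrow> 'v \<Rightarrow> 'v"
    and B :: "'v \<Rightarrow> 'v \<Rightarrow> 'k"
  assumes tp: "transposed_poisson scale mult br"
    and bf: "bilinear_form scale B"
    and sy: "symmetric_form B"
    and nd: "nondegenerate_form B"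
    and iv: "invariant_form mult B"
    and cc: "comm_2_cocycle br B"
    and cd: "\<forall>x y z. B (circ x y) z = B y (br x z)"
begin

lemma Badd1: "B (x + y) z = B x z + B y z" using bf unfolding bilinear_form_def by blast
lemma Badd2: "B x (y + z) = B x y + B x z" using bf unfolding bilinear_form_def by blast
lemma Bsc1: "B (scale a x) y = a * B x y" using bf unfolding bilinear_form_def by blast
lemma Bsc2: "B x (scale a y) = a * B x y" using bf unfolding bilinear_form_def by blast
lemma Bsym: "B x y = B y x" using sy unfolding symmetric_form_def by blast
lemma B0: "B 0 y = 0" using Badd1[of 0 0 y] by simp
lemma B02: "B y 0 = 0" using Badd2[of y 0 0] by simp
lemma Bneg1: "B (- x) y = - B x y"
proof -
  have "B x y + B (-x) y = 0" using Badd1[of x "-x" y] by (simp add: B0)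
  then show ?thesis by (metis minus_unique)
qed
lemma Bneg2: "B y (- x) = - B y x"
proof -
  have "B y x + B y (-x) = 0" using Badd2[of y x "-x"] by (simp add: B02)
  then show ?thesis by (metis minus_unique)
qed
lemma Bdiff1: "B (x - y) z = B x z - B y z" using Badd1[of x "-y" z] Bneg1 by simp
lemma Bdiff2: "B z (x - y) = B z x - B z y" using Badd2[of z x "-y"] Bneg2 by simp
lemma ext: "(\<And>w. B u w = B v w) \<Longrightarrow> u = v"
proof -
  assume h: "\<And>w. B u w = B v w"
  have "\<forall>w. B (u - v) w = 0" using h Bdiff1 by simp
  then show "u = v" using nd unfolding nondegenerate_form_def by auto
qed
lemma inv: "B (mult x y) z = B x (mult y z)" using iv unfolding invariant_form_def by blast
lemma coc: "B (br x y) z + B (br y z) x + B (br z x) y = 0" using cc unfolding comm_2_cocycle_def by blast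
lemma circd: "B (circ x y) z = B y (br x z)" using cd by blast

lemma mcomm: "mult x y = mult y x" using tp unfolding transposed_poisson_def comm_assoc_algebra_def by blast
lemma madd1: "mult (x + y) z = mult x z + mult y z"
  using tp unfolding transposed_poisson_def comm_assoc_algebra_def bilinear_op_def by blast
lemma madd2: "mult x (y + z) = mult x y + mult x z"
  using tp unfolding transposed_poisson_def comm_assoc_algebra_def bilinear_op_def by blast
lemma badd1: "br (x + y) z = br x z + br y z"
  using tp unfolding transposed_poisson_def lie_algebra_def bilinear_op_def by blast
lemma badd2: "br x (y + z) = br x y + br x z"
  using tp unfolding transposed_poisson_def lie_algebra_def bilinear_op_def by blast
lemma bsc1: "br (scale a x) y = scale a (br x y)"
  using tp unfolding transposed_poisson_def lie_algebra_def bilinear_op_def by blast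
lemma bsc2: "br x (scale a y) = scale a (br x y)"
  using tp unfolding transposed_poisson_def lie_algebra_def bilinear_op_def by blast
lemma bself: "br x x = 0"
  using tp unfolding transposed_poisson_def lie_algebra_def by blast
lemma jac: "br x (br y z) + br y (br z x) + br z (br x y) = 0"
  using tp unfolding transposed_poisson_def lie_algebra_def by blast
lemma tpid: "scale 2 (mult z (br x y)) = br (mult z x) y + br x (mult z y)"
  using tp unfolding transposed_poisson_def by blast

lemma b01: "br 0 y = 0" using badd1[of 0 0 y] by simp
lemma b02: "br y 0 = 0" using badd2[of y 0 0] by simp
lemma banti: "br y x = - br x y"
proof -
  have "0 = br (x + y) (x + y)" by (simp add: bself)
  also have "\<dots> = br x x + br y x + (br x y + br y y)" by (simp add: badd1 badd2)
  also have "\<dots> = br x y + br y x" by (simp add: bself)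
  finally have "br x y + br y x = 0" by simp
  then show ?thesis by (metis minus_unique)
qed
lemma bneg1: "br (- x) y = - br x y"
proof -
  have "br x y + br (-x) y = 0" using badd1[of x "-x" y] by (simp add: b01)
  then show ?thesis by (metis minus_unique)
qed
lemma bneg2: "br y (- x) = - br y x"
proof -
  have "br y x + br y (-x) = 0" using badd2[of y x "-x"] by (simp add: b02)
  then show ?thesis by (metis minus_unique)
qed
lemma bdiff1: "br (x - y) z = br x z - br y z" using badd1[of x "-y" z] bneg1 by simp
lemma bdiff2: "br z (x - y) = br z x - br z y" using badd2[of z x "-y"] bneg2 by simp

lemma B2: "B (scale 2 u) w = 2 * B u w" by (rule Bsc1)

lemma CL: "B a (br b c) - B b (br a c) = B (br b a) c"
proof -
  have "B (br b a) c + B (br a c) b + B (br c b) a = 0" by (rule coc)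
  moreover have "B (br c b) a = - B a (br b c)" by (simp add: banti[of b c] Bneg1 Bneg2 Bsym)
  moreover have "B (br a c) b = B b (br a c)" by (simp add: Bsym)
  ultimately show ?thesis by (simp add: algebra_simps eq_neg_iff_add_eq_0)
qed

lemma comm_eq: "commutator circ x y = br x y"
proof (rule ext)
  fix w
  have "B (commutator circ x y) w = B y (br x w) - B x (br y w)"
    by (simp add: commutator_def Bdiff1 circd)
  also have "\<dots> = B (br x y) w" by (rule CL)
  finally show "B (commutator circ x y) w = B (br x y) w" .
qed


lemma N4: "B (br (br a b) c) d = - B (br (br b a) c) d" by (simp add: banti[of a b] bneg1 Bneg1)
lemma Bs4: "B (br a b) (br c d) = B (br c d) (br a b)" by (rule Bsym)
lemma C4: "B (br (br a b) c) d + B (br c d) (br a b) - B (br (br a b) d) c = 0"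
proof -
  have "B (br (br a b) c) d + B (br c d) (br a b) + B (br d (br a b)) c = 0" by (rule coc)
  moreover have "B (br d (br a b)) c = - B (br (br a b) d) c" by (simp add: banti[of d "br a b"] Bneg1)
  ultimately show ?thesis by simp
qed
lemma J4: "B (br (br a b) c) d + B (br (br b c) a) d + B (br (br c a) b) d = 0"
proof -
  have j: "br c (br a b) + br a (br b c) + br b (br c a) = 0" by (rule jac)
  have "br (br a b) c + br (br b c) a + br (br c a) b = - (br c (br a b) + br a (br b c) + br b (br c a))"
    by (simp add: banti[of c "br a b"] banti[of a "br b c"] banti[of b "br c a"] algebra_simps)
  then have "br (br a b) c + br (br b c) a + br (br c a) b = 0" using j by simp
  then have "B (br (br a b) c + br (br b c) a + br (br c a) b) d = 0" by (simp add: B0)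
  then show ?thesis by (simp add: Badd1)
qed

lemma ident2s: "B (br (br x y) w) z + B (br (br y z) w) x + B (br (br z x) w) y = 0"
proof -
  have e0: "(B (br x y) (br z w) - B (br z w) (br x y)) = 0" using Bs4[of x y z w] by (simp add: algebra_simps)
  have e1: "(B (br (br x y) z) w + B (br z w) (br x y) - B (br (br x y) w) z) = 0" using C4[of x y z w] by (simp add: algebra_simps)
  have e2: "(B (br (br x y) z) w + B (br (br y z) x) w + B (br (br z x) y) w) = 0" using J4[of x y z w] by (simp add: algebra_simps)
  have e3: "(B (br (br x y) w) z + B (br (br y w) x) z + B (br (br w x) y) z) = 0" using J4[of x y w z] by (simp add: algebra_simps)
  have e4: "(B (br (br x z) y) w + B (br (br z x) y) w) = 0" using N4[of x z y w] by (simp add: algebra_simps)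
  have e5: "(B (br x z) (br y w) - B (br y w) (br x z)) = 0" using Bs4[of x z y w] by (simp add: algebra_simps)
  have e6: "(B (br (br x z) y) w + B (br y w) (br x z) - B (br (br x z) w) y) = 0" using C4[of x z y w] by (simp add: algebra_simps)
  have e7: "(B (br (br x z) w) y + B (br (br z x) w) y) = 0" using N4[of x z w y] by (simp add: algebra_simps)
  have e8: "(B (br (br x z) w) y + B (br (br z w) x) y + B (br (br w x) z) y) = 0" using J4[of x z w y] by (simp add: algebra_simps)
  have e9: "(B (br (br x w) y) z + B (br (br w x) y) z) = 0" using N4[of x w y z] by (simp add: algebra_simps)
  have e10: "(B (br x w) (br y z) - B (br y z) (br x w)) = 0" using Bs4[of x w y z] by (simp add: algebra_simps)
  have e11: "(B (br (br x w) y) z + B (br y z) (br x w) - B (br (br x w) z) y) = 0" using C4[of x w y z] by (simp add: algebra_simps)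
  have e12: "(B (br (br x w) z) y + B (br (br w x) z) y) = 0" using N4[of x w z y] by (simp add: algebra_simps)
  have e13: "(B (br (br y z) x) w + B (br x w) (br y z) - B (br (br y z) w) x) = 0" using C4[of y z x w] by (simp add: algebra_simps)
  have e14: "(B (br (br y z) w) x + B (br (br z w) y) x + B (br (br w y) z) x) = 0" using J4[of y z w x] by (simp add: algebra_simps)
  have e15: "(B (br (br y w) x) z + B (br x z) (br y w) - B (br (br y w) z) x) = 0" using C4[of y w x z] by (simp add: algebra_simps)
  have e16: "(B (br (br y w) z) x + B (br (br w y) z) x) = 0" using N4[of y w z x] by (simp add: algebra_simps)
  have e17: "(B (br (br z w) x) y + B (br x y) (br z w) - B (br (br z w) y) x) = 0" using C4[of z w x y] by (simp add: algebra_simps)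
  have "2 * (B (br (br x y) w) z + B (br (br y z) w) x + B (br (br z x) w) y) = (-1) * (B (br x y) (br z w) - B (br z w) (br x y)) + (-1) * (B (br (br x y) z) w + B (br z w) (br x y) - B (br (br x y) w) z) + (1) * (B (br (br x y) z) w + B (br (br y z) x) w + B (br (br z x) y) w) + (1) * (B (br (br x y) w) z + B (br (br y w) x) z + B (br (br w x) y) z) + (-1) * (B (br (br x z) y) w + B (br (br z x) y) w) + (1) * (B (br x z) (br y w) - B (br y w) (br x z)) + (1) * (B (br (br x z) y) w + B (br y w) (br x z) - B (br (br x z) w) y) + (2) * (B (br (br x z) w) y + B (br (br z x) w) y) + (-1) * (B (br (br x z) w) y + B (br (br z w) x) y + B (br (br w x) z) y) + (-1) * (B (br (br x w) y) z + B (br (br w x) y) z) + (1) * (B (br x w) (br y z) - B (br y z) (br x w)) + (1) * (B (br (br x w) y) z + B (br y z) (br x w) - B (br (br x w) z) y) + (1) * (B (br (br x w) z) y + B (br (br w x) z) y) + (-1) * (B (br (br y z) x) w + B (br x w) (br y z) - B (br (br y z) w) x) + (1) * (B (br (br y z) w) x + B (br (br z w) y) x + B (br (br w y) z) x) + (-1) * (B (br (br y w) x) z + B (br x z) (br y w) - B (br (br y w) z) x) + (-1) * (B (br (br y w) z) x + B (br (br w y) z) x) + (1) * (B (br (br z w) x) y + B (br x y) (br z w) - B (br (br z w) y) x)"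
    by (simp add: algebra_simps)
  also have "\<dots> = 0" by (simp only: e0 e1 e2 e3 e4 e5 e6 e7 e8 e9 e10 e11 e12 e13 e14 e15 e16 e17) simp
  finally show ?thesis by (metis mult_eq_0_iff zero_neq_numeral)
qed

lemma Sig: "B (mult x (br y z)) w + B (mult y (br z x)) w + B (mult z (br x y)) w = 0"
proof -
  have e1: "2 * B (mult x (br y z)) w = B (br (mult x y) z) w + B (br y (mult x z)) w"
    using arg_cong[OF tpid[of x y z], of "\<lambda>u. B u w"] by (simp add: B2 Badd1)
  have e2: "2 * B (mult y (br z x)) w = B (br (mult y z) x) w + B (br z (mult y x)) w"
    using arg_cong[OF tpid[of y z x], of "\<lambda>u. B u w"] by (simp add: B2 Badd1)
  have e3: "2 * B (mult z (br x y)) w = B (br (mult z x) y) w + B (br x (mult z y)) w"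
    using arg_cong[OF tpid[of z x y], of "\<lambda>u. B u w"] by (simp add: B2 Badd1)
  have f1: "B (br z (mult y x)) w = - B (br (mult x y) z) w"
    by (simp add: mcomm[of y x] banti[of z "mult x y"] Bneg1)
  have f2: "B (br x (mult z y)) w = - B (br (mult y z) x) w"
    by (simp add: mcomm[of z y] banti[of x "mult y z"] Bneg1)
  have f3: "B (br y (mult x z)) w = - B (br (mult z x) y) w"
    by (simp add: mcomm[of x z] banti[of y "mult z x"] Bneg1)
  have "2 * (B (mult x (br y z)) w + B (mult y (br z x)) w + B (mult z (br x y)) w) = 0"
    using e1 e2 e3 f1 f2 f3 by algebra
  then show ?thesis by (metis mult_eq_0_iff zero_neq_numeral)
qed


lemma m01: "mult x 0 = 0" using madd2[of x 0 0] by simp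
lemma mneg2: "mult x (- y) = - mult x y"
proof -
  have "mult x y + mult x (-y) = 0" using madd2[of x y "-y"] by (simp add: m01)
  then show ?thesis by (metis minus_unique)
qed

lemma circ_add1: "circ (x + y) z = circ x z + circ y z"
  by (rule ext) (simp add: circd badd1 Badd1 Badd2)
lemma circ_add2: "circ x (y + z) = circ x y + circ x z"
  by (rule ext) (simp add: circd Badd1)
lemma circ_sc1: "circ (scale a x) y = scale a (circ x y)"
  by (rule ext) (simp add: circd bsc1 Bsc1 Bsc2)
lemma circ_sc2: "circ x (scale a y) = scale a (circ x y)"
  by (rule ext) (simp add: circd Bsc1)

lemma apl1: "circ x (circ y z) - circ y (circ x z) = circ (commutator circ y x) z"
proof (rule ext)
  fix w
  have j: "br y (br x w) + br x (br w y) + br w (br y x) = 0" by (rule jac)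
  have "br x (br w y) = - br x (br y w)" by (simp add: banti[of w y] bneg2)
  moreover have "br w (br y x) = - br (br y x) w" by (rule banti)
  ultimately have "br y (br x w) + - br x (br y w) + - br (br y x) w = 0" using j by simp
  then have v: "br y (br x w) - br x (br y w) = br (br y x) w"
    by (metis add_diff_cancel_left' add_diff_eq diff_minus_eq_add eq_neg_iff_add_eq_0 minus_diff_eq)
  have "B (circ x (circ y z) - circ y (circ x z)) w = B z (br y (br x w)) - B z (br x (br y w))"
    by (simp add: Bdiff1 circd)
  also have "\<dots> = B z (br (br y x) w)" by (simp add: v[symmetric] Bdiff2)
  also have "\<dots> = B (circ (commutator circ y x) z) w" by (simp add: circd comm_eq)
  finally show "B (circ x (circ y z) - circ y (circ x z)) w = B (circ (commutator circ y x) z) w" .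
qed

lemma apl2: "circ (commutator circ x y) z + circ (commutator circ y z) x + circ (commutator circ z x) y = 0"
proof (rule ext)
  fix w
  have "B (circ (commutator circ x y) z + circ (commutator circ y z) x + circ (commutator circ z x) y) w
     = B z (br (br x y) w) + B x (br (br y z) w) + B y (br (br z x) w)"
    by (simp add: Badd1 circd comm_eq)
  also have "\<dots> = B (br (br x y) w) z + B (br (br y z) w) x + B (br (br z x) w) y"
    using Bsym by metis
  also have "\<dots> = 0" by (rule ident2s)
  also have "\<dots> = B 0 w" by (simp add: B0)
  finally show "B (circ (commutator circ x y) z + circ (commutator circ y z) x + circ (commutator circ z x) y) w = B 0 w" .
qed

lemma Gs: "B (br x y) (mult z w) = B (mult z y) (br x w) - B (mult z x) (br y w)"
proof -
  have S1: "B (mult z y) (br x w) - B x (br (mult z y) w) = B (br x (mult z y)) w" by (rule CL)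
  have S2: "B (mult z x) (br y w) - B y (br (mult z x) w) = B (br y (mult z x)) w" by (rule CL)
  have T1: "2 * B (mult z (br x y)) w = B (br (mult z x) y) w + B (br x (mult z y)) w"
    using arg_cong[OF tpid[of z x y], of "\<lambda>u. B u w"] by (simp add: B2 Badd1)
  have A1: "B (br y (mult z x)) w = - B (br (mult z x) y) w" by (simp add: banti[of y] Bneg1)
  have T2: "2 * B x (mult y (br z w)) = B x (br (mult z y) w) + B x (br z (mult y w))"
    using arg_cong[OF tpid[of y z w], of "\<lambda>u. B x u"] by (simp add: Bsc2 Badd2 mcomm[of y z])
  have T3: "2 * B y (mult x (br z w)) = B y (br (mult z x) w) + B y (br z (mult x w))"
    using arg_cong[OF tpid[of x z w], of "\<lambda>u. B y u"] by (simp add: Bsc2 Badd2 mcomm[of x z])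
  have I1: "B x (mult y (br z w)) = B y (mult x (br z w))" by (metis inv mcomm)
  have C1: "B x (br z (mult y w)) = B (br z x) (mult y w) + B (br x (mult y w)) z"
  proof -
    have "B (br (mult y w) z) x + B (br z x) (mult y w) + B (br x (mult y w)) z = 0" by (rule coc)
    moreover have "B (br (mult y w) z) x = - B x (br z (mult y w))"
      by (simp add: banti[of "mult y w" z] Bneg1 Bneg2 Bsym)
    ultimately show ?thesis by algebra
  qed
  have C2: "B y (br z (mult x w)) = B (br z y) (mult x w) + B (br y (mult x w)) z"
  proof -
    have "B (br (mult x w) z) y + B (br z y) (mult x w) + B (br y (mult x w)) z = 0" by (rule coc)
    moreover have "B (br (mult x w) z) y = - B y (br z (mult x w))"
      by (simp add: banti[of "mult x w" z] Bneg1 Bneg2 Bsym)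
    ultimately show ?thesis by algebra
  qed
  have T4: "2 * B (mult y (br x w)) z = B (br (mult y x) w) z + B (br x (mult y w)) z"
    using arg_cong[OF tpid[of y x w], of "\<lambda>u. B u z"] by (simp add: B2 Badd1)
  have T5: "2 * B (mult x (br y w)) z = B (br (mult x y) w) z + B (br y (mult x w)) z"
    using arg_cong[OF tpid[of x y w], of "\<lambda>u. B u z"] by (simp add: B2 Badd1)
  have E: "B (br (mult y x) w) z = B (br (mult x y) w) z" by (simp add: mcomm[of y x])
  have K1: "B (mult y (br x w)) z = B (mult z y) (br x w)" by (metis inv Bsym)
  have K2: "B (mult x (br y w)) z = B (mult z x) (br y w)" by (metis inv Bsym)
  have L1: "B (br z x) (mult y w) = B (mult y (br z x)) w" by (metis inv mcomm)
  have L2: "B (br z y) (mult x w) = B (mult x (br z y)) w" by (metis inv mcomm)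
  have N2: "B (mult x (br z y)) w = - B (mult x (br y z)) w" by (simp add: banti[of z y] mneg2 Bneg1)
  have Sg: "B (mult x (br y z)) w + B (mult y (br z x)) w + B (mult z (br x y)) w = 0" by (rule Sig)
  have H: "B (br x y) (mult z w) = B (mult z (br x y)) w" by (metis inv mcomm)
  have "3 * B (br x y) (mult z w) - 3 * (B (mult z y) (br x w) - B (mult z x) (br y w)) = (-1) * ((B (mult z y) (br x w) - B x (br (mult z y) w)) - (B (br x (mult z y)) w)) + (1) * ((B (mult z x) (br y w) - B y (br (mult z x) w)) - (B (br y (mult z x)) w)) + (1) * ((2 * B (mult z (br x y)) w) - (B (br (mult z x) y) w + B (br x (mult z y)) w)) + (1) * ((B (br y (mult z x)) w) - (- B (br (mult z x) y) w)) + (1) * ((2 * B x (mult y (br z w))) - (B x (br (mult z y) w) + B x (br z (mult y w)))) + (-1) * ((2 * B y (mult x (br z w))) - (B y (br (mult z x) w) + B y (br z (mult x w)))) + (-2) * ((B x (mult y (br z w))) - (B y (mult x (br z w)))) + (1) * ((B x (br z (mult y w))) - (B (br z x) (mult y w) + B (br x (mult y w)) z)) + (-1) * ((B y (br z (mult x w))) - (B (br z y) (mult x w) + B (br y (mult x w)) z)) + (-1) * ((2 * B (mult y (br x w)) z) - (B (br (mult y x) w) z + B (br x (mult y w)) z)) + (1) * ((2 * B (mult x (br y w)) z) - (B (br (mult x y) w) z + B (br y (mult x w)) z)) + (-1) * ((B (br (mult y x) w) z) - (B (br (mult x y) w) z)) + (2) * ((B (mult y (br x w)) z) - (B (mult z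 y) (br x w))) + (-2) * ((B (mult x (br y w)) z) - (B (mult z x) (br y w))) + (1) * ((B (br z x) (mult y w)) - (B (mult y (br z x)) w)) + (-1) * ((B (br z y) (mult x w)) - (B (mult x (br z y)) w)) + (-1) * ((B (mult x (br z y)) w) - (- B (mult x (br y z)) w)) + (1) * ((B (mult x (br y z)) w + B (mult y (br z x)) w + B (mult z (br x y)) w) - (0)) + (3) * ((B (br x y) (mult z w)) - (B (mult z (br x y)) w))"
    by algebra
  also have "\<dots> = 0" using S1 S2 T1 A1 T2 T3 I1 C1 C2 T4 T5 E K1 K2 L1 L2 N2 Sg H by simp
  finally have "3 * B (br x y) (mult z w) = 3 * (B (mult z y) (br x w) - B (mult z x) (br y w))"
    by simp
  then show ?thesis by (metis mult_cancel_left zero_neq_numeral)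
qed

lemma pa: "scale 2 (mult (circ x y) z) - scale 2 (mult (circ y x) z) = mult y (circ x z) - mult x (circ y z)"
proof (rule ext)
  fix w
  have "B (scale 2 (mult (circ x y) z) - scale 2 (mult (circ y x) z)) w
      = 2 * (B y (br x (mult z w)) - B x (br y (mult z w)))"
    by (simp add: Bdiff1 B2 inv circd algebra_simps)
  also have "\<dots> = 2 * B (br x y) (mult z w)" by (simp add: CL)
  finally have l: "B (scale 2 (mult (circ x y) z) - scale 2 (mult (circ y x) z)) w = 2 * B (br x y) (mult z w)" .
  have m: "\<And>a u. B (mult a u) w = B u (mult a w)" by (metis inv mcomm)
  have "B (mult y (circ x z) - mult x (circ y z)) w = B z (br x (mult y w)) - B z (br y (mult x w))"
    by (simp add: Bdiff1 m circd)
  also have "\<dots> = 2 * B z (mult y (br x w)) - 2 * B z (mult x (br y w))"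
  proof -
    have T4: "2 * B z (mult y (br x w)) = B z (br (mult y x) w) + B z (br x (mult y w))"
      using arg_cong[OF tpid[of y x w], of "\<lambda>u. B z u"] by (simp add: Bsc2 Badd2)
    have T5: "2 * B z (mult x (br y w)) = B z (br (mult x y) w) + B z (br y (mult x w))"
      using arg_cong[OF tpid[of x y w], of "\<lambda>u. B z u"] by (simp add: Bsc2 Badd2)
    have E: "B z (br (mult y x) w) = B z (br (mult x y) w)" by (simp add: mcomm[of y x])
    show ?thesis using T4 T5 E by algebra
  qed
  also have "\<dots> = 2 * (B (mult z y) (br x w) - B (mult z x) (br y w))"
    by (simp add: inv algebra_simps)
  also have "\<dots> = 2 * B (br x y) (mult z w)" by (simp add: Gs)
  finally show "B (scale 2 (mult (circ x y) z) - scale 2 (mult (circ y x) z)) w = B (mult y (circ x z) - mult x (circ y z)) w"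
    using l by simp
qed

lemma pb: "scale 2 (circ x (mult y z)) = circ (mult z x) y + mult z (circ x y)"
proof (rule ext)
  fix w
  have m: "\<And>a u. B (mult a u) w = B u (mult a w)" by (metis inv mcomm)
  have "B (circ (mult z x) y + mult z (circ x y)) w = B y (br (mult z x) w + br x (mult z w))"
    by (simp add: Badd1 Badd2 m circd)
  also have "\<dots> = B y (scale 2 (mult z (br x w)))" by (simp add: tpid)
  also have "\<dots> = 2 * B (mult y z) (br x w)" by (simp add: Bsc2 inv)
  also have "\<dots> = B (scale 2 (circ x (mult y z))) w" by (simp add: B2 circd)
  finally show "B (scale 2 (circ x (mult y z))) w = B (circ (mult z x) y + mult z (circ x y)) w" by simp
qed

lemma main: "anti_pre_lie_poisson scale mult circ"
proof -
  have h: "comm_assoc_algebra scale mult" using tp unfolding transposed_poisson_def by blast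
  show ?thesis unfolding anti_pre_lie_poisson_def anti_pre_lie_def bilinear_op_def
    using h by (simp add: pa pb apl1 apl2 circ_add1 circ_add2 circ_sc1 circ_sc2)
qed

end

theorem proposition3p46:
  fixes scale :: "'k::field_char_0 \<Rightarrow> 'v::ab_group_add \<Rightarrow> 'v"
    and Basis :: "'v set"
    and mult br circ :: "'v \<Rightarrow> 'v \<Rightarrow> 'v"
    and B :: "'v \<Rightarrow> 'v \<Rightarrow> 'k"
  assumes "finite_dimensional_vector_space scale Basis"
    and "transposed_poisson scale mult br"
    and "bilinear_form scale B"
    and "symmetric_form B"
    and "nondegenerate_form B"
    and "invariant_form mult B"
    and "comm_2_cocycle br B"
    and "\<forall>x y z. B (circ x y) z = B y (br x z)"
  shows "anti_pre_lie_poisson scale mult circ"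
proof -
  interpret tpctx scale mult br circ B
    using assms(2-8) by unfold_locales
  show ?thesis by (rule main)
qed

end
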